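(* Fix $n\geq 3$ and let $r>0$. Then $T^{\circ r}$ is positive definite for every positive definite matrix $T$ of the form below if and only if $r\geq 1$; likewise, $T^{\circ r}$ is positive semidefinite for every positive semidefinite matrix $T$ of the form below if and only if $r\geq 1$. Here $T$ ranges over the $n\times n$ symmetric tridiagonal matrices with diagonal entries $T_{ii}=a_i\geq 0$ ($1\le i\le n$), off-diagonal entries $T_{j,j+1}=T_{j+1,j}=b_j\geq 0$ ($1\le j\le n-1$), and all other entries zero.
   Context: For a nonnegative matrix $A=[a_{ij}]$ and $r>0$, the Hadamard power is $A^{\circ r}=[a_{ij}^r]$. Positive (semi)definite matrices are required to be symmetric. *)

theory Defs
  imports "HOL-Analysis.Analysis"
begin

text \<open>n x n real matrices represented as functions nat => nat => real,
  with indices ranging over {0..<n} (entries outside are irrelevant).\<close>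

definition sym_mat :: "nat \<Rightarrow> (nat \<Rightarrow> nat \<Rightarrow> real) \<Rightarrow> bool" where
  "sym_mat n A \<longleftrightarrow> (\<forall>i<n. \<forall>j<n. A i j = A j i)"

definition quad_form :: "nat \<Rightarrow> (nat \<Rightarrow> nat \<Rightarrow> real) \<Rightarrow> (nat \<Rightarrow> real) \<Rightarrow> real" where
  "quad_form n A x = (\<Sum>i<n. \<Sum>j<n. x i * A i j * x j)"

definition pos_def :: "nat \<Rightarrow> (nat \<Rightarrow> nat \<Rightarrow> real) \<Rightarrow> bool" where
  "pos_def n A \<longleftrightarrow> sym_mat n A \<and>
     (\<forall>x. (\<exists>i<n. x i \<noteq> 0) \<longrightarrow> quad_form n A x > 0)"

definition pos_semidef :: "nat \<Rightarrow> (nat \<Rightarrow> nat \<Rightarrow> real) \<Rightarrow> bool" where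
  "pos_semidef n A \<longleftrightarrow> sym_mat n A \<and> (\<forall>x. quad_form n A x \<ge> 0)"

definition hadamard_pow :: "(nat \<Rightarrow> nat \<Rightarrow> real) \<Rightarrow> real \<Rightarrow> (nat \<Rightarrow> nat \<Rightarrow> real)" where
  "hadamard_pow A r = (\<lambda>i j. A i j powr r)"

text \<open>Symmetric tridiagonal matrix with nonnegative diagonal a_i and
  nonnegative off-diagonal b_j (0-based indices: diagonal i < n,
  off-diagonal positions (j, j+1), (j+1, j) for j < n - 1), zero elsewhere.\<close>
definition nonneg_tridiag :: "nat \<Rightarrow> (nat \<Rightarrow> nat \<Rightarrow> real) \<Rightarrow> bool" where
  "nonneg_tridiag n T \<longleftrightarrow>
     (\<exists>a b :: nat \<Rightarrow> real.
        (\<forall>i<n. a i \<ge> 0) \<and> (\<forall>j. j + 1 < n \<longrightarrow> b j \<ge> 0) \<and>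
        (\<forall>i<n. \<forall>k<n. T i k =
           (if i = k then a i
            else if k = i + 1 then b i
            else if i = k + 1 then b k
            else 0)))"

end

theory Submission
  imports Defs
begin

definition tri :: "(nat \<Rightarrow> real) \<Rightarrow> (nat \<Rightarrow> real) \<Rightarrow> nat \<Rightarrow> nat \<Rightarrow> real" where
  "tri a b = (\<lambda>i k. if i = k then a i else if k = i + 1 then b i
                      else if i = k + 1 then b k else 0)"

definition cf :: "nat \<Rightarrow> (nat \<Rightarrow> real) \<Rightarrow> (nat \<Rightarrow> real) \<Rightarrow> (nat \<Rightarrow> real) \<Rightarrow> real" where
  "cf n a b x = (\<Sum>i<n. a i * (x i)^2) + 2 * (\<Sum>i<n-1. b i * x i * x (Suc i))"

fun tq :: "nat \<Rightarrow> (nat \<Rightarrow> real) \<Rightarrow> (nat \<Rightarrow> real) \<Rightarrow> (nat \<Rightarrow> real) \<Rightarrow> real" where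
  "tq 0 a b x = 0"
| "tq (Suc n) a b x = a 0 * (x 0)^2 + (if n = 0 then 0 else 2 * b 0 * x 0 * x 1)
     + tq n (\<lambda>i. a (Suc i)) (\<lambda>i. b (Suc i)) (\<lambda>i. x (Suc i))"

lemma tq_cf: "tq n a b x = cf n a b x"
proof (induction n arbitrary: a b x)
  case 0
  then show ?case by (simp add: cf_def)
next
  case (Suc n)
  show ?case
  proof (cases n)
    case 0
    then show ?thesis by (simp add: cf_def)
  next
    case (Suc m)
    have e1: "(\<Sum>i<Suc n. a i * (x i)^2) = a 0 * (x 0)^2 + (\<Sum>i<n. a (Suc i) * (x (Suc i))^2)"
      by (rule sum.lessThan_Suc_shift)
    have e2: "(\<Sum>i<n. b i * x i * x (Suc i)) = b 0 * x 0 * x (Suc 0) + (\<Sum>i<m. b (Suc i) * x (Suc i) * x (Suc (Suc i)))"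
      unfolding Suc by (rule sum.lessThan_Suc_shift)
    show ?thesis
      unfolding tq.simps Suc.IH cf_def diff_Suc_1 e1 e2
      using Suc by (simp only: diff_Suc_1 nat.simps if_False) (simp add: algebra_simps)
  qed
qed

lemma quad_form_Suc:
  "quad_form (Suc n) A x = quad_form n A x + (\<Sum>i<n. x i * A i n * x n)
     + (\<Sum>j<n. x n * A n j * x j) + x n * A n n * x n"
  by (simp add: quad_form_def sum.distrib algebra_simps)

lemma col_sum: "(\<Sum>i<n. x i * tri a b i n * x n) = (if n = 0 then 0 else x (n-1) * b (n-1) * x n)"
proof (cases n)
  case (Suc m)
  have "(\<Sum>i<m. x i * tri a b i n * x n) = 0"
    by (intro sum.neutral) (auto simp: tri_def Suc)
  then show ?thesis using Suc by (simp add: tri_def)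
qed simp

lemma row_sum: "(\<Sum>i<n. x n * tri a b n i * x i) = (if n = 0 then 0 else x (n-1) * b (n-1) * x n)"
proof (cases n)
  case (Suc m)
  have "(\<Sum>i<m. x n * tri a b n i * x i) = 0"
    by (intro sum.neutral) (auto simp: tri_def Suc)
  then show ?thesis using Suc by (simp add: tri_def)
qed simp

lemma quad_tri: "quad_form n (tri a b) x = cf n a b x"
proof (induction n)
  case 0
  then show ?case by (simp add: quad_form_def cf_def)
next
  case (Suc n)
  show ?case
  proof (cases n)
    case 0
    then show ?thesis by (simp add: quad_form_def cf_def tri_def power2_eq_square)
  next
    case (Suc m)
    show ?thesis
      unfolding quad_form_Suc Suc.IH col_sum row_sum
      using Suc by (simp add: cf_def tri_def power2_eq_square algebra_simps)
  qed
qed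

lemma quad_cong: "(\<forall>i<n. \<forall>k<n. A i k = B i k) \<Longrightarrow> quad_form n A x = quad_form n B x"
  unfolding quad_form_def by (intro sum.cong refl) auto

lemma tq_zero: "(\<forall>i<n. y i = 0) \<Longrightarrow> tq n a b y = 0"
  by (simp add: tq_cf cf_def)

lemma tq_e0: "n > 0 \<Longrightarrow> tq n a b (\<lambda>i. if i = 0 then 1 else 0) = a 0"
  by (cases n) (auto simp: tq_zero)

lemma tq_upd0: "n > 0 \<Longrightarrow> tq n (a(0 := d)) b y = tq n a b y + (d - a 0) * (y 0)^2"
  by (cases n) (auto simp: algebra_simps)

lemma superadd:
  fixes u v r :: real
  assumes "0 \<le> u" "0 \<le> v" "1 \<le> r"
  shows "u powr r + v powr r \<le> (u + v) powr r"
proof (cases "u + v = 0")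
  case True
  then have "u = 0" "v = 0" using assms by auto
  then show ?thesis by simp
next
  case False
  define w where "w = u + v"
  have w: "w > 0" using False assms w_def by auto
  have "(u/w) powr r \<le> (u/w) powr 1"
    by (rule powr_mono') (use assms w w_def in auto)
  then have 1: "u powr r \<le> u / w * w powr r"
    using w assms by (simp add: powr_divide field_simps)
  have "(v/w) powr r \<le> (v/w) powr 1"
    by (rule powr_mono') (use assms w w_def in auto)
  then have 2: "v powr r \<le> v / w * w powr r"
    using w assms by (simp add: powr_divide field_simps)
  have s1: "u / w + v / w = 1"
    using w w_def by (simp add: add_divide_distrib[symmetric])
  have "u / w * w powr r + v / w * w powr r = w powr r"
    by (metis s1 distrib_right mult_1)
  with 1 2 show ?thesis unfolding w_def by linarith
qed

lemma two_by_two: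
  fixes A B E x y :: real
  assumes "A > 0" "A * E \<ge> B^2"
  shows "A * x^2 + 2 * B * x * y + E * y^2 \<ge> 0"
proof -
  have "A * (A * x^2 + 2 * B * x * y + E * y^2) = (A*x + B*y)^2 + (A*E - B^2) * y^2"
    by (simp add: power2_eq_square algebra_simps)
  also have "\<dots> \<ge> 0" using assms by simp
  finally show ?thesis using assms(1) by (simp add: zero_le_mult_iff)
qed


lemma shift_vec: "tq (Suc n) a b (\<lambda>i. if i = 0 then t else y (i - 1))
   = a 0 * t^2 + (if n = 0 then 0 else 2 * b 0 * t * y 0) + tq n (\<lambda>i. a (Suc i)) (\<lambda>i. b (Suc i)) y"
  by simp

lemma key_ineq:
  fixes a0 a1 b0 c r :: real
  assumes "1 \<le> r" "a0 > 0" "b0 \<ge> 0" "c \<ge> 0" "a1 = c + b0^2/a0"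
  shows "a0 powr r * (a1 powr r - c powr r) \<ge> (b0 powr r)^2"
proof -
  have "c powr r + (b0^2/a0) powr r \<le> a1 powr r"
    using superadd[of c "b0^2/a0" r] assms by auto
  then have "a1 powr r - c powr r \<ge> (b0^2/a0) powr r" by linarith
  then have "a0 powr r * (a1 powr r - c powr r) \<ge> a0 powr r * (b0^2/a0) powr r"
    using assms by (intro mult_left_mono) auto
  moreover have "a0 powr r * (b0^2/a0) powr r = (b0 powr r)^2"
  proof -
    have "a0 powr r * (b0^2/a0) powr r = (a0 * (b0^2/a0)) powr r"
      using assms by (subst powr_mult) auto
    also have "\<dots> = (b0 * b0) powr r" using assms by (simp add: power2_eq_square)
    also have "\<dots> = (b0 powr r)^2" using assms by (simp add: powr_mult power2_eq_square)
    finally show ?thesis .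
  qed
  ultimately show ?thesis by simp
qed

lemma psd_main:
  assumes r: "1 \<le> r"
  shows "(\<forall>i<n. 0 \<le> a i) \<Longrightarrow> (\<forall>i. Suc i < n \<longrightarrow> 0 \<le> b i) \<Longrightarrow> (\<forall>y. 0 \<le> tq n a b y)
     \<Longrightarrow> 0 \<le> tq n (\<lambda>i. a i powr r) (\<lambda>i. b i powr r) x"
proof (induction n arbitrary: a b x)
  case 0
  then show ?case by simp
next
  case (Suc n)
  have tail: "\<forall>y. 0 \<le> tq n (\<lambda>i. a (Suc i)) (\<lambda>i. b (Suc i)) y"
  proof
    fix y
    have "0 \<le> tq (Suc n) a b (\<lambda>i. if i = 0 then 0 else y (i - 1))" using Suc.prems(3) by blast
    then show "0 \<le> tq n (\<lambda>i. a (Suc i)) (\<lambda>i. b (Suc i)) y" by (cases n) auto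
  qed
  show ?case
  proof (cases n)
    case 0
    then show ?thesis by simp
  next
    case (Suc m)
    have npos: "n > 0" using Suc by simp
    have a0: "0 \<le> a 0" using Suc.prems(1) by auto
    have b0: "0 \<le> b 0" using Suc.prems(2) Suc by auto
    show ?thesis
    proof (cases "a 0 = 0")
      case True
      have "b 0 = 0"
      proof (rule ccontr)
        assume "b 0 \<noteq> 0"
        then have bp: "b 0 > 0" using b0 by auto
        define t where "t = - (a 1 + 1) / (2 * b 0)"
        have "0 \<le> tq (Suc n) a b (\<lambda>i. if i = 0 then t else (\<lambda>j. if j = 0 then 1 else 0) (i - 1))"
          using Suc.prems(3) by blast
        also have "\<dots> = a 0 * t^2 + 2 * b 0 * t * 1 + tq n (\<lambda>i. a (Suc i)) (\<lambda>i. b (Suc i)) (\<lambda>i. if i = 0 then 1 else 0)"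
          using npos by simp
        also have "\<dots> = 2 * b 0 * t + a 1" using True tq_e0[OF npos] by simp
        also have "\<dots> = -1" using bp unfolding t_def by (simp add: field_simps)
        finally show False by simp
      qed
      then have "tq (Suc n) (\<lambda>i. a i powr r) (\<lambda>i. b i powr r) x
          = tq n (\<lambda>i. a (Suc i) powr r) (\<lambda>i. b (Suc i) powr r) (\<lambda>i. x (Suc i))"
        using True by simp
      also have "\<dots> \<ge> 0"
        by (rule Suc.IH) (use Suc.prems tail in auto)
      finally show ?thesis .
    next
      case False
      then have ap: "a 0 > 0" using a0 by auto
      define c where "c = a 1 - (b 0)^2 / a 0"
      define a' where "a' = (\<lambda>i. a (Suc i))(0 := c)"
      have tail': "\<forall>y. 0 \<le> tq n a' (\<lambda>i. b (Suc i)) y"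
      proof
        fix y
        have "0 \<le> tq (Suc n) a b (\<lambda>i. if i = 0 then - b 0 * y 0 / a 0 else y (i - 1))"
          using Suc.prems(3) by blast
        also have "\<dots> = a 0 * (- b 0 * y 0 / a 0)^2 + 2 * b 0 * (- b 0 * y 0 / a 0) * y 0
             + tq n (\<lambda>i. a (Suc i)) (\<lambda>i. b (Suc i)) y"
          using npos by simp
        also have "\<dots> = tq n a' (\<lambda>i. b (Suc i)) y"
          unfolding a'_def tq_upd0[OF npos] c_def using ap
          by (simp add: field_simps power2_eq_square)
        finally show "0 \<le> tq n a' (\<lambda>i. b (Suc i)) y" .
      qed
      have c0: "0 \<le> c"
        using tail' tq_e0[OF npos, of a' "\<lambda>i. b (Suc i)"] unfolding a'_def by (metis fun_upd_same)
      have IH: "0 \<le> tq n (\<lambda>i. a' i powr r) (\<lambda>i. b (Suc i) powr r) (\<lambda>i. x (Suc i))"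
        apply (rule Suc.IH)
        subgoal using Suc.prems(1) c0 by (auto simp: a'_def)
        subgoal using Suc.prems(2) by auto
        subgoal using tail' by blast
        done
      have eqa: "(\<lambda>i. a (Suc i) powr r) = (\<lambda>i. a' i powr r)(0 := a 1 powr r)"
        by (auto simp: a'_def)
      have "tq (Suc n) (\<lambda>i. a i powr r) (\<lambda>i. b i powr r) x
         = a 0 powr r * (x 0)^2 + 2 * b 0 powr r * x 0 * x 1
           + (a 1 powr r - c powr r) * (x 1)^2
           + tq n (\<lambda>i. a' i powr r) (\<lambda>i. b (Suc i) powr r) (\<lambda>i. x (Suc i))"
        using npos by (simp add: eqa tq_upd0 a'_def)
      also have "\<dots> \<ge> 0"
      proof -
        have "a 0 powr r * (a 1 powr r - c powr r) \<ge> (b 0 powr r)^2"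
          by (rule key_ineq) (use r ap b0 c0 c_def in auto)
        then have "a 0 powr r * (x 0)^2 + 2 * b 0 powr r * x 0 * x 1
           + (a 1 powr r - c powr r) * (x 1)^2 \<ge> 0"
          using ap by (intro two_by_two) auto
        with IH show ?thesis by linarith
      qed
      finally show ?thesis .
    qed
  qed
qed


lemma pd_psd: "(\<forall>y. (\<exists>i<n. y i \<noteq> 0) \<longrightarrow> 0 < tq n a b y) \<Longrightarrow> 0 \<le> tq n a b z"
  by (cases "\<exists>i<n. z i \<noteq> 0") (auto simp: tq_zero intro: less_imp_le)

lemma pd_main:
  assumes r: "1 \<le> r"
  shows "(\<forall>i<n. 0 \<le> a i) \<Longrightarrow> (\<forall>i. Suc i < n \<longrightarrow> 0 \<le> b i)
     \<Longrightarrow> (\<forall>y. (\<exists>i<n. y i \<noteq> 0) \<longrightarrow> 0 < tq n a b y) \<Longrightarrow> (\<exists>i<n. x i \<noteq> 0)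
     \<Longrightarrow> 0 < tq n (\<lambda>i. a i powr r) (\<lambda>i. b i powr r) x"
proof (induction n arbitrary: a b x)
  case 0
  then show ?case by simp
next
  case (Suc n)
  have "\<exists>i<Suc n. (\<lambda>i. if i = 0 then 1 else 0 :: real) i \<noteq> 0" by auto
  then have "0 < tq (Suc n) a b (\<lambda>i. if i = 0 then 1 else 0)"
    by (rule Suc.prems(3)[rule_format])
  then have ap: "a 0 > 0" using tq_e0[of "Suc n" a b] by simp
  show ?case
  proof (cases n)
    case 0
    then have "x 0 \<noteq> 0" using Suc.prems(4) by auto
    then show ?thesis using 0 ap by simp
  next
    case (Suc m)
    have npos: "n > 0" using Suc by simp
    have b0: "0 \<le> b 0" using Suc.prems(2) Suc by auto
    define c where "c = a 1 - (b 0)^2 / a 0"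
    define a' where "a' = (\<lambda>i. a (Suc i))(0 := c)"
    have tail': "\<forall>y. (\<exists>i<n. y i \<noteq> 0) \<longrightarrow> 0 < tq n a' (\<lambda>i. b (Suc i)) y"
    proof (intro allI impI)
      fix y :: "nat \<Rightarrow> real"
      assume yz: "\<exists>i<n. y i \<noteq> 0"
      have "\<exists>i<Suc n. (\<lambda>i. if i = 0 then - b 0 * y 0 / a 0 else y (i - 1)) i \<noteq> 0"
      proof -
        obtain j where "j < n" "y j \<noteq> 0" using yz by blast
        then show ?thesis by (intro exI[of _ "Suc j"]) auto
      qed
      then have "0 < tq (Suc n) a b (\<lambda>i. if i = 0 then - b 0 * y 0 / a 0 else y (i - 1))"
        by (rule Suc.prems(3)[rule_format])
      also have "\<dots> = a 0 * (- b 0 * y 0 / a 0)^2 + 2 * b 0 * (- b 0 * y 0 / a 0) * y 0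
           + tq n (\<lambda>i. a (Suc i)) (\<lambda>i. b (Suc i)) y"
        using npos by simp
      also have "\<dots> = tq n a' (\<lambda>i. b (Suc i)) y"
        unfolding a'_def tq_upd0[OF npos] c_def using ap
        by (simp add: field_simps power2_eq_square)
      finally show "0 < tq n a' (\<lambda>i. b (Suc i)) y" .
    qed
    have "\<exists>i<n. (\<lambda>i. if i = 0 then 1 else 0 :: real) i \<noteq> 0" using npos by auto
    then have "0 < tq n a' (\<lambda>i. b (Suc i)) (\<lambda>i. if i = 0 then 1 else 0)"
      by (rule tail'[rule_format])
    then have c0: "0 \<le> c"
      using tq_e0[OF npos, of a' "\<lambda>i. b (Suc i)"] unfolding a'_def by simp
    have IH: "\<And>z. (\<exists>i<n. z i \<noteq> 0) \<Longrightarrow> 0 < tq n (\<lambda>i. a' i powr r) (\<lambda>i. b (Suc i) powr r) z"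
      apply (rule Suc.IH)
      subgoal using Suc.prems(1) c0 by (auto simp: a'_def)
      subgoal using Suc.prems(2) by auto
      subgoal by (rule tail')
      subgoal by assumption
      done
    have IH0: "0 \<le> tq n (\<lambda>i. a' i powr r) (\<lambda>i. b (Suc i) powr r) (\<lambda>i. x (Suc i))"
      by (rule pd_psd) (use IH in auto)
    have eqa: "(\<lambda>i. a (Suc i) powr r) = (\<lambda>i. a' i powr r)(0 := a 1 powr r)"
      by (auto simp: a'_def)
    have "tq (Suc n) (\<lambda>i. a i powr r) (\<lambda>i. b i powr r) x
       = a 0 powr r * (x 0)^2 + 2 * b 0 powr r * x 0 * x 1
         + (a 1 powr r - c powr r) * (x 1)^2
         + tq n (\<lambda>i. a' i powr r) (\<lambda>i. b (Suc i) powr r) (\<lambda>i. x (Suc i))"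
      using npos by (simp add: eqa tq_upd0 a'_def)
    also have "\<dots> > 0"
    proof -
      have "a 0 powr r * (a 1 powr r - c powr r) \<ge> (b 0 powr r)^2"
        by (rule key_ineq) (use r ap b0 c0 c_def in auto)
      then have Q2: "a 0 powr r * (x 0)^2 + 2 * b 0 powr r * x 0 * x 1
         + (a 1 powr r - c powr r) * (x 1)^2 \<ge> 0"
        using ap by (intro two_by_two) auto
      show ?thesis
      proof (cases "\<exists>i<n. x (Suc i) \<noteq> 0")
        case True
        with IH[OF True] Q2 show ?thesis by linarith
      next
        case False
        then have x1: "x 1 = 0" using npos by auto
        have "x 0 \<noteq> 0"
        proof
          assume x0: "x 0 = 0"
          obtain i where i: "i < Suc n" "x i \<noteq> 0" using Suc.prems(4) by blast
          show False
          proof (cases i)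
            case 0 then show False using i x0 by simp
          next
            case (Suc j) then show False using i False by auto
          qed
        qed
        then have "a 0 powr r * (x 0)^2 > 0" using ap by simp
        moreover have "tq n (\<lambda>i. a' i powr r) (\<lambda>i. b (Suc i) powr r) (\<lambda>i. x (Suc i)) = 0"
          using False by (intro tq_zero) auto
        ultimately show ?thesis using x1 by simp
      qed
    qed
    finally show ?thesis .
  qed
qed

lemma tri_pow: "tri (\<lambda>i. a i powr r) (\<lambda>i. b i powr r) = hadamard_pow (tri a b) r"
  by (auto simp: tri_def hadamard_pow_def fun_eq_iff)

lemma tri_sym: "sym_mat n (tri a b)"
  by (auto simp: sym_mat_def tri_def)

lemma tq3: "tq (Suc (Suc (Suc m))) a b x = a 0 * (x 0)^2 + 2 * b 0 * x 0 * x 1 + a 1 * (x 1)^2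
   + 2 * b 1 * x 1 * x 2 + a 2 * (x 2)^2 + (if m = 0 then 0 else 2 * b 2 * x 2 * x 3)
   + tq m (\<lambda>i. a (Suc (Suc (Suc i)))) (\<lambda>i. b (Suc (Suc (Suc i)))) (\<lambda>i. x (Suc (Suc (Suc i))))"
  by (simp add: numeral_2_eq_2 numeral_3_eq_3)

lemma counterex:
  assumes n: "n \<ge> 3" and r: "0 < r" "r < 1"
  shows "\<exists>T. nonneg_tridiag n T \<and> pos_def n T \<and> pos_semidef n T \<and>
           (\<exists>x. quad_form n (hadamard_pow T r) x < 0 \<and> x 0 \<noteq> 0)"
proof -
  define m where "m = n - 3"
  have m: "n = Suc (Suc (Suc m))" using n unfolding m_def by arith
  define c :: real where "c = (2 + 2 powr (1/r)) / 2"
  have big: "2 < 2 powr (1/(r::real))"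
  proof -
    have "(2::real) powr 1 < 2 powr (1/r)" using r by (intro powr_less_mono) (auto simp: field_simps)
    then show ?thesis by simp
  qed
  have c2: "c > 2" using big c_def by simp
  have "c powr r < (2 powr (1/r)) powr r"
    using big c_def r by (intro powr_less_mono2) auto
  also have "\<dots> = 2" using r by (simp add: powr_powr)
  finally have cr: "c powr r < 2" .
  define a :: "nat \<Rightarrow> real" where "a = (\<lambda>i. if i = 1 then c else 1)"
  define b :: "nat \<Rightarrow> real" where "b = (\<lambda>i. if i < 2 then 1 else 0)"
  have tail1: "\<And>y. tq m (\<lambda>i. a (Suc (Suc (Suc i)))) (\<lambda>i. b (Suc (Suc (Suc i)))) y = (\<Sum>i<m. (y i)^2)"
    by (simp add: tq_cf cf_def a_def b_def)
  have Q: "\<And>x. quad_form n (tri a b) x = (x 0 + x 1)^2 + (x 1 + x 2)^2 + (c - 2) * (x 1)^2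
          + (\<Sum>i<m. (x (Suc (Suc (Suc i))))^2)"
    unfolding quad_tri tq_cf[symmetric] m tq3 tail1
    by (simp add: a_def b_def power2_eq_square algebra_simps)
  have psd: "pos_semidef n (tri a b)"
    unfolding pos_semidef_def using tri_sym c2
    by (auto simp: Q intro!: add_nonneg_nonneg sum_nonneg)
  have pd: "pos_def n (tri a b)"
    unfolding pos_def_def
  proof (intro conjI tri_sym allI impI)
    fix x :: "nat \<Rightarrow> real"
    assume "\<exists>i<n. x i \<noteq> 0"
    then obtain i where i: "i < n" "x i \<noteq> 0" by blast
    have S: "0 \<le> (\<Sum>i<m. (x (Suc (Suc (Suc i))))^2)" by (auto intro: sum_nonneg)
    show "0 < quad_form n (tri a b) x"
    proof (cases "x 0 = 0 \<and> x 1 = 0 \<and> x 2 = 0")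
      case True
      then have "i \<ge> 3" using i by (cases i; cases "i - 1"; cases "i - 2"; auto simp: numeral_2_eq_2 numeral_3_eq_3)
      define j where "j = i - 3"
      have j: "i = Suc (Suc (Suc j))" using \<open>i \<ge> 3\<close> unfolding j_def by arith
      have "j < m" using i j m by simp
      then have "(x (Suc (Suc (Suc j))))^2 \<le> (\<Sum>i<m. (x (Suc (Suc (Suc i))))^2)"
        by (intro member_le_sum) auto
      moreover have "(x (Suc (Suc (Suc j))))^2 > 0" using i j by simp
      ultimately have "0 < (\<Sum>i<m. (x (Suc (Suc (Suc i))))^2)" by linarith
      then show ?thesis using True by (simp add: Q)
    next
      case False
      have "(x 0 + x 1)^2 + (x 1 + x 2)^2 + (c - 2) * (x 1)^2 > 0"
      proof (cases "x 1 = 0")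
        case True
        then show ?thesis using False by (simp add: add_pos_nonneg sum_power2_gt_zero_iff)
      next
        case False
        then have "(c - 2) * (x 1)^2 > 0" using c2 by simp
        then show ?thesis by (smt (verit) zero_le_power2)
      qed
      then show ?thesis using S by (simp add: Q)
    qed
  qed
  define x :: "nat \<Rightarrow> real" where "x = (\<lambda>i. if i = 0 \<or> i = 2 then 1 else if i = 1 then -1 else 0)"
  have pa: "(\<lambda>i. a i powr r) = (\<lambda>i. if i = 1 then c powr r else 1)"
    by (auto simp: a_def fun_eq_iff)
  have pb: "(\<lambda>i. b i powr r) = b"
    by (auto simp: b_def fun_eq_iff)
  have "quad_form n (hadamard_pow (tri a b) r) x = c powr r - 2"
    unfolding tri_pow[symmetric] quad_tri tq_cf[symmetric] m tq3 pa pb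
    by (simp add: x_def b_def tq_zero)
  then have "quad_form n (hadamard_pow (tri a b) r) x < 0" using cr by simp
  moreover have "nonneg_tridiag n (tri a b)"
    unfolding nonneg_tridiag_def
    by (rule exI[of _ a], rule exI[of _ b]) (use c2 in \<open>auto simp: a_def b_def tri_def\<close>)
  moreover have "x 0 \<noteq> 0" by (simp add: x_def)
  ultimately show ?thesis using pd psd by blast
qed


lemma tri_facts:
  assumes "nonneg_tridiag n T"
  obtains a b where "\<forall>i<n. 0 \<le> a i" "\<forall>i. Suc i < n \<longrightarrow> 0 \<le> b i"
    "\<And>x. quad_form n T x = tq n a b x"
    "\<And>x. quad_form n (hadamard_pow T r) x = tq n (\<lambda>i. a i powr r) (\<lambda>i. b i powr r) x"
proof -
  obtain a b where ab: "\<forall>i<n. a i \<ge> 0" "\<forall>j. j + 1 < n \<longrightarrow> b j \<ge> 0"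
    "\<forall>i<n. \<forall>k<n. T i k = tri a b i k"
    using assms unfolding nonneg_tridiag_def tri_def by blast
  have q1: "\<And>x. quad_form n T x = tq n a b x"
    using ab(3) by (simp add: quad_cong[of n T "tri a b"] quad_tri tq_cf)
  have "\<forall>i<n. \<forall>k<n. hadamard_pow T r i k = hadamard_pow (tri a b) r i k"
    using ab(3) by (simp add: hadamard_pow_def)
  then have q2: "\<And>x. quad_form n (hadamard_pow T r) x = tq n (\<lambda>i. a i powr r) (\<lambda>i. b i powr r) x"
    by (simp add: quad_cong[of n "hadamard_pow T r" "hadamard_pow (tri a b) r"] tri_pow[symmetric] quad_tri tq_cf)
  show ?thesis using ab(1,2) q1 q2 that by simp
qed

lemma sym_hp: "sym_mat n T \<Longrightarrow> sym_mat n (hadamard_pow T r)"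
  by (simp add: sym_mat_def hadamard_pow_def)

theorem theorem1p2:
  fixes n :: nat and r :: real
  assumes "n \<ge> 3" and "r > 0"
  shows "((\<forall>T. nonneg_tridiag n T \<and> pos_def n T \<longrightarrow> pos_def n (hadamard_pow T r))
            \<longleftrightarrow> r \<ge> 1)
       \<and> ((\<forall>T. nonneg_tridiag n T \<and> pos_semidef n T \<longrightarrow> pos_semidef n (hadamard_pow T r))
            \<longleftrightarrow> r \<ge> 1)"
proof (intro conjI iffI allI impI)
  assume H: "\<forall>T. nonneg_tridiag n T \<and> pos_def n T \<longrightarrow> pos_def n (hadamard_pow T r)"
  show "r \<ge> 1"
  proof (rule ccontr)
    assume "\<not> r \<ge> 1"
    then obtain T x where T: "nonneg_tridiag n T" "pos_def n T"
      "quad_form n (hadamard_pow T r) x < 0" "x 0 \<noteq> 0"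
      using counterex[of n r] assms by force
    have "pos_def n (hadamard_pow T r)" using H T by blast
    moreover have "\<exists>i<n. x i \<noteq> 0" using T(4) assms by (intro exI[of _ 0]) auto
    ultimately have "quad_form n (hadamard_pow T r) x > 0" unfolding pos_def_def by blast
    with T(3) show False by simp
  qed
next
  fix T assume r1: "r \<ge> 1" and T: "nonneg_tridiag n T \<and> pos_def n T"
  obtain a b where ab: "\<forall>i<n. 0 \<le> a i" "\<forall>i. Suc i < n \<longrightarrow> 0 \<le> b i"
    "\<And>x. quad_form n T x = tq n a b x"
    "\<And>x. quad_form n (hadamard_pow T r) x = tq n (\<lambda>i. a i powr r) (\<lambda>i. b i powr r) x"
    using tri_facts[of n T r] T by blast
  have pd: "\<forall>y. (\<exists>i<n. y i \<noteq> 0) \<longrightarrow> 0 < tq n a b y"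
    using T unfolding pos_def_def ab(3) by blast
  show "pos_def n (hadamard_pow T r)"
    unfolding pos_def_def ab(4)
  proof (intro conjI allI impI)
    show "sym_mat n (hadamard_pow T r)" using T sym_hp unfolding pos_def_def by blast
  next
    fix x :: "nat \<Rightarrow> real" assume "\<exists>i<n. x i \<noteq> 0"
    then show "0 < tq n (\<lambda>i. a i powr r) (\<lambda>i. b i powr r) x"
      using pd_main[OF r1 ab(1) ab(2) pd] by blast
  qed
next
  assume H: "\<forall>T. nonneg_tridiag n T \<and> pos_semidef n T \<longrightarrow> pos_semidef n (hadamard_pow T r)"
  show "r \<ge> 1"
  proof (rule ccontr)
    assume "\<not> r \<ge> 1"
    then obtain T x where T: "nonneg_tridiag n T" "pos_semidef n T"
      "quad_form n (hadamard_pow T r) x < 0"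
      using counterex[of n r] assms by force
    have "pos_semidef n (hadamard_pow T r)" using H T by blast
    then have "quad_form n (hadamard_pow T r) x \<ge> 0" unfolding pos_semidef_def by blast
    with T(3) show False by simp
  qed
next
  fix T assume r1: "r \<ge> 1" and T: "nonneg_tridiag n T \<and> pos_semidef n T"
  obtain a b where ab: "\<forall>i<n. 0 \<le> a i" "\<forall>i. Suc i < n \<longrightarrow> 0 \<le> b i"
    "\<And>x. quad_form n T x = tq n a b x"
    "\<And>x. quad_form n (hadamard_pow T r) x = tq n (\<lambda>i. a i powr r) (\<lambda>i. b i powr r) x"
    using tri_facts[of n T r] T by blast
  have psd: "\<forall>y. 0 \<le> tq n a b y"
    using T unfolding pos_semidef_def ab(3) by blast
  show "pos_semidef n (hadamard_pow T r)"
    unfolding pos_semidef_def ab(4)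
    using T sym_hp psd_main[OF r1 ab(1) ab(2) psd] unfolding pos_semidef_def by blast
qed

end
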